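(* Let $(X,\mathcal{A},\mu)$ be a probability space, $\theta$ a measure-preserving endomorphism, $\varphi$ a bounded ceiling function and $(\overline{X},\overline{\mu},(\Phi_t))$ the associated special flow. Let $A\subset X$ be a hole such that the escape rate $\rho(A,\varphi)$ exists. Then \[\rho(A,\varphi)=\lim_{t\to\infty}-\frac1t\log\overline{\mu}\big(\{(x,s)\in\overline{X}:N_A(x)\ge N_t^\varphi(x)\}\big)=\lim_{t\to\infty}-\frac1t\log\mu\big(\{x\in X:N_A(x)\ge N_t^\varphi(x)\}\big).\]
   Context: A ceiling function is a measurable $\varphi:X\to\mathbb{R}$ with $\inf\varphi>0$. $S_n\varphi=\sum_{k=0}^{n-1}\varphi\circ\theta^k$, $N_t^\varphi(x)=\min\{n\in\mathbb{N}_0:S_n\varphi(x)>t\}$ for $t\ge0$, and $N_A(x)=\min\{n\in\mathbb{N}_0:\theta^n(x)\in A\}$. Special flow: $\overline{X}=\{(x,s):0\le s<\varphi(x)\}$, $\overline{\mu}$ the restriction of $\mu\otimes$Lebesgue; $\Phi_t(x,s)=(x,s+t)$ if $t<\varphi(x)-s$, otherwise $\Phi_t(x,s)=(\theta^{N-1}x,s+t-S_{N-1}\varphi(x))$ with $N=N^\varphi_{s+t}(x)$. $\pi_1$ is the projection to $X$. A hole $A\subset X$ is a measurable set with $\bigcup_{n\ge0}\theta^{-n}(A)=X$ up to a $\mu$-null set. The escape rate $\rho(A,\varphi)$ is $\lim_{t\to\infty}-\frac1t\log\overline{\mu}(\{(x,s):\forall\tau\in[0,t]:\Phi_\tau(x,s)\notin\pi_1^{-1}(A)\})$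 when this limit exists. *)

theory Defs
  imports "HOL-Probability.Probability"
begin

definition measure_preserving :: "'a measure \<Rightarrow> 'b measure \<Rightarrow> ('a \<Rightarrow> 'b) set" where
  "measure_preserving M N =
     {f \<in> measurable M N. \<forall>B\<in>sets N. emeasure M (f -` B \<inter> space M) = emeasure N B}"

definition birk_sum :: "('a \<Rightarrow> 'a) \<Rightarrow> ('a \<Rightarrow> real) \<Rightarrow> nat \<Rightarrow> 'a \<Rightarrow> real" where
  "birk_sum \<theta> \<phi> n x = (\<Sum>k<n. \<phi> ((\<theta> ^^ k) x))"

definition N_ceil :: "('a \<Rightarrow> 'a) \<Rightarrow> ('a \<Rightarrow> real) \<Rightarrow> real \<Rightarrow> 'a \<Rightarrow> nat" where
  "N_ceil \<theta> \<phi> t x = (LEAST n. birk_sum \<theta> \<phi> n x > t)"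

definition N_hit :: "('a \<Rightarrow> 'a) \<Rightarrow> 'a set \<Rightarrow> 'a \<Rightarrow> enat" where
  "N_hit \<theta> A x = (if \<exists>n. (\<theta> ^^ n) x \<in> A then enat (LEAST n. (\<theta> ^^ n) x \<in> A) else \<infinity>)"

definition flow_space :: "'a measure \<Rightarrow> ('a \<Rightarrow> real) \<Rightarrow> ('a \<times> real) set" where
  "flow_space M \<phi> = {(x, s). x \<in> space M \<and> 0 \<le> s \<and> s < \<phi> x}"

definition flow_measure :: "'a measure \<Rightarrow> ('a \<Rightarrow> real) \<Rightarrow> ('a \<times> real) set \<Rightarrow> real" where
  "flow_measure M \<phi> S = measure (M \<Otimes>\<^sub>M lborel) (S \<inter> flow_space M \<phi>)"

definition special_flow :: "('a \<Rightarrow> 'a) \<Rightarrow> ('a \<Rightarrow> real) \<Rightarrow> real \<Rightarrow> 'a \<times> real \<Rightarrow> 'a \<times> real" where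
  "special_flow \<theta> \<phi> t p = (case p of (x, s) \<Rightarrow>
     (if t < \<phi> x - s then (x, s + t)
      else (let N = N_ceil \<theta> \<phi> (s + t) x in
            ((\<theta> ^^ (N - 1)) x, s + t - birk_sum \<theta> \<phi> (N - 1) x))))"

definition survivors :: "'a measure \<Rightarrow> ('a \<Rightarrow> 'a) \<Rightarrow> ('a \<Rightarrow> real) \<Rightarrow> 'a set \<Rightarrow> real \<Rightarrow> ('a \<times> real) set" where
  "survivors M \<theta> \<phi> A t =
     {p \<in> flow_space M \<phi>. \<forall>\<tau>\<in>{0..t}. fst (special_flow \<theta> \<phi> \<tau> p) \<notin> A}"

definition is_hole :: "'a measure \<Rightarrow> ('a \<Rightarrow> 'a) \<Rightarrow> 'a set \<Rightarrow> bool" where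
  "is_hole M \<theta> A \<longleftrightarrow> A \<in> sets M \<and> (AE x in M. \<exists>n. (\<theta> ^^ n) x \<in> A)"

definition has_escape_rate :: "'a measure \<Rightarrow> ('a \<Rightarrow> 'a) \<Rightarrow> ('a \<Rightarrow> real) \<Rightarrow> 'a set \<Rightarrow> real \<Rightarrow> bool" where
  "has_escape_rate M \<theta> \<phi> A \<rho> \<longleftrightarrow>
     ((\<lambda>t. - (1 / t) * ln (flow_measure M \<phi> (survivors M \<theta> \<phi> A t))) \<longlongrightarrow> \<rho>) at_top"

end

theory Submission imports Defs begin


lemma funpow_space:
  assumes "\<forall>y\<in>space M. \<theta> y \<in> space M" "x \<in> space M"
  shows "(\<theta> ^^ k) x \<in> space M"
  using assms by (induction k) auto

lemma birk_sum_0[simp]: "birk_sum \<theta> \<phi> 0 x = 0"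
  by (simp add: birk_sum_def)

lemma birk_sum_Suc: "birk_sum \<theta> \<phi> (Suc n) x = birk_sum \<theta> \<phi> n x + \<phi> ((\<theta> ^^ n) x)"
  by (simp add: birk_sum_def)

lemma birk_sum_1: "birk_sum \<theta> \<phi> (Suc 0) x = \<phi> x"
  by (simp add: birk_sum_def)

locale comb =
  fixes M :: "'a measure" and \<theta> :: "'a \<Rightarrow> 'a" and \<phi> :: "'a \<Rightarrow> real" and c :: real
  assumes sp: "\<forall>y\<in>space M. \<theta> y \<in> space M"
    and cpos: "c > 0" and clow: "\<forall>y\<in>space M. c \<le> \<phi> y"
begin

lemma phi_pos: "x \<in> space M \<Longrightarrow> (\<theta> ^^ k) x \<in> space M \<and> \<phi> ((\<theta> ^^ k) x) > 0"
  using funpow_space[OF sp] clow cpos by (meson less_le_trans)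

lemma birk_mono: "x \<in> space M \<Longrightarrow> m \<le> n \<Longrightarrow> birk_sum \<theta> \<phi> m x \<le> birk_sum \<theta> \<phi> n x"
  unfolding birk_sum_def
  by (rule sum_mono2) (auto intro: less_imp_le phi_pos[THEN conjunct2])

lemma birk_lower: "x \<in> space M \<Longrightarrow> real n * c \<le> birk_sum \<theta> \<phi> n x"
proof -
  assume x: "x \<in> space M"
  have "(\<Sum>k<n. c) \<le> (\<Sum>k<n. \<phi> ((\<theta> ^^ k) x))"
    by (rule sum_mono) (use clow funpow_space[OF sp x] in auto)
  then show ?thesis by (simp add: birk_sum_def)
qed

lemma birk_ex: "x \<in> space M \<Longrightarrow> \<exists>n. birk_sum \<theta> \<phi> n x > t"
proof -
  assume x: "x \<in> space M"
  obtain n where n: "real n > t / c" using reals_Archimedean2 by blast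
  then have "real n * c > t" using cpos by (simp add: pos_divide_less_eq)
  then show ?thesis using birk_lower[OF x, of n] by (intro exI[of _ n]) linarith
qed

lemma N_ceil_iff: "x \<in> space M \<Longrightarrow> k < N_ceil \<theta> \<phi> t x \<longleftrightarrow> birk_sum \<theta> \<phi> k x \<le> t"
proof
  assume "k < N_ceil \<theta> \<phi> t x"
  then show "birk_sum \<theta> \<phi> k x \<le> t" unfolding N_ceil_def using not_less_Least by force
next
  assume x: "x \<in> space M" and h: "birk_sum \<theta> \<phi> k x \<le> t"
  have L: "birk_sum \<theta> \<phi> (N_ceil \<theta> \<phi> t x) x > t"
    unfolding N_ceil_def by (rule LeastI_ex) (rule birk_ex[OF x])
  show "k < N_ceil \<theta> \<phi> t x"
  proof (rule ccontr)
    assume "\<not> k < N_ceil \<theta> \<phi> t x"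
    then have "birk_sum \<theta> \<phi> (N_ceil \<theta> \<phi> t x) x \<le> birk_sum \<theta> \<phi> k x"
      by (intro birk_mono[OF x]) simp
    then show False using L h by linarith
  qed
qed

lemma N_hit_ge_iff: "enat m \<le> N_hit \<theta> A x \<longleftrightarrow> (\<forall>k<m. (\<theta> ^^ k) x \<notin> A)"
proof (cases "\<exists>n. (\<theta> ^^ n) x \<in> A")
  case True
  define L where "L = (LEAST n. (\<theta> ^^ n) x \<in> A)"
  have LA: "(\<theta> ^^ L) x \<in> A" unfolding L_def by (rule LeastI_ex[OF True])
  have "N_hit \<theta> A x = enat L" using True by (simp add: N_hit_def L_def)
  moreover have "m \<le> L \<longleftrightarrow> (\<forall>k<m. (\<theta> ^^ k) x \<notin> A)"
  proof
    assume "m \<le> L" then show "\<forall>k<m. (\<theta> ^^ k) x \<notin> A"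
      unfolding L_def using not_less_Least by (metis order_less_le_trans)
  next
    assume "\<forall>k<m. (\<theta> ^^ k) x \<notin> A" then show "m \<le> L" using LA by (metis not_le)
  qed
  ultimately show ?thesis by simp
next
  case False
  then show ?thesis by (simp add: N_hit_def)
qed

lemma key_iff: "x \<in> space M \<Longrightarrow>
  enat (N_ceil \<theta> \<phi> t x) \<le> N_hit \<theta> A x \<longleftrightarrow> (\<forall>k. birk_sum \<theta> \<phi> k x \<le> t \<longrightarrow> (\<theta> ^^ k) x \<notin> A)"
  by (simp add: N_hit_ge_iff N_ceil_iff)

lemma flow_fst:
  assumes x: "x \<in> space M" and s: "0 \<le> s" "s < \<phi> x" and tau: "0 \<le> \<tau>"
  shows "fst (special_flow \<theta> \<phi> \<tau> (x, s)) = (\<theta> ^^ (N_ceil \<theta> \<phi> (s + \<tau>) x - 1)) x"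
proof (cases "\<tau> < \<phi> x - s")
  case True
  have "0 < N_ceil \<theta> \<phi> (s + \<tau>) x" using N_ceil_iff[OF x, of 0] s tau by simp
  moreover have "\<not> 1 < N_ceil \<theta> \<phi> (s + \<tau>) x" using N_ceil_iff[OF x, of 1] True
    by (simp add: birk_sum_1)
  ultimately have "N_ceil \<theta> \<phi> (s + \<tau>) x = 1" by linarith
  then show ?thesis using True by (simp add: special_flow_def)
next
  case False
  then show ?thesis by (simp add: special_flow_def Let_def)
qed

lemma survivors_eq:
  assumes t: "0 \<le> t"
  shows "survivors M \<theta> \<phi> A t =
    {(x, s) \<in> flow_space M \<phi>. \<forall>k. birk_sum \<theta> \<phi> k x \<le> s + t \<longrightarrow> (\<theta> ^^ k) x \<notin> A}"
proof (intro set_eqI iffI)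
  fix p assume p: "p \<in> survivors M \<theta> \<phi> A t"
  obtain x s where ps: "p = (x, s)" by (cases p)
  have x: "x \<in> space M" and s: "0 \<le> s" "s < \<phi> x" and fs: "(x,s) \<in> flow_space M \<phi>"
    using p ps by (auto simp: survivors_def flow_space_def)
  have surv: "\<forall>\<tau>\<in>{0..t}. fst (special_flow \<theta> \<phi> \<tau> (x,s)) \<notin> A"
    using p ps by (simp add: survivors_def)
  have "(\<theta> ^^ k) x \<notin> A" if k: "birk_sum \<theta> \<phi> k x \<le> s + t" for k
  proof -
    define u where "u = max s (birk_sum \<theta> \<phi> k x)"
    have "birk_sum \<theta> \<phi> (Suc k) x > birk_sum \<theta> \<phi> k x"
      using phi_pos[OF x, of k] by (simp add: birk_sum_Suc)
    moreover have "birk_sum \<theta> \<phi> (Suc k) x > s"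
      using birk_mono[OF x, of 1 "Suc k"] s by (simp add: birk_sum_1)
    ultimately have "\<not> Suc k < N_ceil \<theta> \<phi> u x" using N_ceil_iff[OF x] u_def by simp
    moreover have "k < N_ceil \<theta> \<phi> u x" using N_ceil_iff[OF x] u_def by simp
    ultimately have N: "N_ceil \<theta> \<phi> (s + (u - s)) x = Suc k" by simp
    have "u - s \<in> {0..t}" using k t u_def by auto
    then have "fst (special_flow \<theta> \<phi> (u - s) (x,s)) \<notin> A" using surv by blast
    then show ?thesis using flow_fst[OF x s, of "u - s"] N u_def by simp
  qed
  then show "p \<in> {(x, s) \<in> flow_space M \<phi>. \<forall>k. birk_sum \<theta> \<phi> k x \<le> s + t \<longrightarrow> (\<theta> ^^ k) x \<notin> A}"
    using fs ps by auto
next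
  fix p assume p: "p \<in> {(x, s) \<in> flow_space M \<phi>. \<forall>k. birk_sum \<theta> \<phi> k x \<le> s + t \<longrightarrow> (\<theta> ^^ k) x \<notin> A}"
  obtain x s where ps: "p = (x, s)" by (cases p)
  have x: "x \<in> space M" and s: "0 \<le> s" "s < \<phi> x" and fs: "(x,s) \<in> flow_space M \<phi>"
    and H: "\<forall>k. birk_sum \<theta> \<phi> k x \<le> s + t \<longrightarrow> (\<theta> ^^ k) x \<notin> A"
    using p ps by (auto simp: flow_space_def)
  have "fst (special_flow \<theta> \<phi> \<tau> (x,s)) \<notin> A" if tau: "\<tau> \<in> {0..t}" for \<tau>
  proof -
    define j where "j = N_ceil \<theta> \<phi> (s + \<tau>) x - 1"
    have "0 < N_ceil \<theta> \<phi> (s + \<tau>) x" using N_ceil_iff[OF x, of 0] s tau by simp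
    then have "j < N_ceil \<theta> \<phi> (s + \<tau>) x" unfolding j_def by simp
    then have "birk_sum \<theta> \<phi> j x \<le> s + t" using N_ceil_iff[OF x] tau by fastforce
    then show ?thesis using H flow_fst[OF x s, of \<tau>] tau j_def by simp
  qed
  then show "p \<in> survivors M \<theta> \<phi> A t" using fs ps by (simp add: survivors_def)
qed

end


lemma inv_t_lim: "((\<lambda>t::real. K / t) \<longlongrightarrow> 0) at_top"
  by (rule tendsto_divide_0[OF tendsto_const]) (rule filterlim_at_top_imp_at_infinity[OF filterlim_ident])

lemma rate_transfer:
  fixes f u :: "real \<Rightarrow> real"
  assumes lim: "((\<lambda>t. - (1/t) * ln (f t)) \<longlongrightarrow> \<rho>) at_top"
    and f0: "\<And>t. 0 \<le> t \<Longrightarrow> 0 \<le> f t"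
    and anti: "\<And>t t'. 0 \<le> t \<Longrightarrow> t \<le> t' \<Longrightarrow> f t' \<le> f t"
    and a: "a > 0" and b: "b > 0" and D: "D \<ge> 0"
    and bnd: "\<And>t. t \<ge> D \<Longrightarrow> a * f t \<le> u t \<and> u t \<le> b * f (t - D)"
  shows "((\<lambda>t. - (1/t) * ln (u t)) \<longlongrightarrow> \<rho>) at_top"
proof (cases "\<exists>t0\<ge>0. f t0 = 0")
  case True
  then obtain t0 where t0: "t0 \<ge> 0" "f t0 = 0" by blast
  have fz: "f t = 0" if "t \<ge> t0" for t using anti[OF t0(1) that] f0[of t] t0 that by simp
  have "eventually (\<lambda>t. - (1/t) * ln (f t) = 0) at_top"
    using eventually_ge_at_top[of t0] by eventually_elim (simp add: fz)
  then have "((\<lambda>t. - (1/t) * ln (f t)) \<longlongrightarrow> 0) at_top" by (rule tendsto_eventually)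
  with lim have r: "\<rho> = 0" using tendsto_unique trivial_limit_at_top_linorder by blast
  have "eventually (\<lambda>t. - (1/t) * ln (u t) = 0) at_top"
    using eventually_ge_at_top[of "t0 + D"]
  proof eventually_elim
    case (elim t)
    have "D \<le> t" using elim t0(1) by linarith
    then have "u t = 0" using bnd[of t] fz[of t] fz[of "t - D"] elim D a b by simp
    then show ?case by simp
  qed
  then show ?thesis unfolding r by (rule tendsto_eventually)
next
  case False
  then have fp: "f t > 0" if "t \<ge> 0" for t using f0[OF that] that by force
  define F where "F t = - (1/t) * ln (f t)" for t
  have lim': "(F \<longlongrightarrow> \<rho>) at_top" using lim unfolding F_def .
  have l1': "((\<lambda>t. - ln b / t + ((t - D) / t) * F (t - D)) \<longlongrightarrow> 0 + 1 * \<rho>) at_top"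
  proof (intro tendsto_add tendsto_mult inv_t_lim)
    have "((\<lambda>t. 1 - D / t) \<longlongrightarrow> 1 - 0) at_top" by (intro tendsto_diff tendsto_const inv_t_lim)
    moreover have "eventually (\<lambda>t. 1 - D / t = (t - D) / t) at_top"
      using eventually_gt_at_top[of 0] by eventually_elim (simp add: field_simps)
    ultimately show "((\<lambda>t. (t - D) / t) \<longlongrightarrow> 1) at_top" using Lim_transform_eventually by fastforce
    have "filterlim (\<lambda>t. - D + t) at_top at_top"
      by (rule filterlim_tendsto_add_at_top[OF tendsto_const filterlim_ident])
    then have "filterlim (\<lambda>t. t - D) at_top at_top" by simp
    then show "((\<lambda>t. F (t - D)) \<longlongrightarrow> \<rho>) at_top" by (rule filterlim_compose[OF lim'])
  qed
  have l2': "((\<lambda>t. - ln a / t + F t) \<longlongrightarrow> 0 + \<rho>) at_top"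
    by (intro tendsto_add inv_t_lim lim')
  have l1: "((\<lambda>t. - ln b / t + ((t - D) / t) * F (t - D)) \<longlongrightarrow> \<rho>) at_top" using l1' by simp
  have l2: "((\<lambda>t. - ln a / t + F t) \<longlongrightarrow> \<rho>) at_top" using l2' by simp
  show ?thesis
  proof (rule tendsto_sandwich[OF _ _ l1 l2])
    show "eventually (\<lambda>t. - ln b / t + ((t - D) / t) * F (t - D) \<le> - (1/t) * ln (u t)) at_top"
      using eventually_ge_at_top[of "D + 1"]
    proof eventually_elim
      case (elim t)
      have tp: "t > 0" "t - D > 0" using elim D by auto
      have fpos: "f (t - D) > 0" "f t > 0" using fp tp by auto
      have up: "u t > 0" using bnd[of t] elim D a fpos by (smt (verit) mult_pos_pos)
      have "ln (u t) \<le> ln (b * f (t - D))" using bnd[of t] elim up b fpos by simp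
      also have "\<dots> = ln b + ln (f (t - D))" using b fpos by (simp add: ln_mult)
      finally have "- (1/t) * (ln b + ln (f (t - D))) \<le> - (1/t) * ln (u t)"
        using tp by (simp add: divide_simps)
      moreover have "- (1/t) * (ln b + ln (f (t - D))) = - ln b / t + ((t - D) / t) * F (t - D)"
        using tp unfolding F_def by (simp add: field_simps)
      ultimately show ?case by simp
    qed
    show "eventually (\<lambda>t. - (1/t) * ln (u t) \<le> - ln a / t + F t) at_top"
      using eventually_ge_at_top[of "D + 1"]
    proof eventually_elim
      case (elim t)
      have tp: "t > 0" using elim D by auto
      have fpos: "f t > 0" using fp tp by auto
      have af: "a * f t > 0" using a fpos by simp
      have "ln (a * f t) \<le> ln (u t)" using bnd[of t] elim af by (subst ln_le_cancel_iff) auto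
      also have "ln (a * f t) = ln a + ln (f t)" using a fpos by (simp add: ln_mult)
      finally have "- (1/t) * ln (u t) \<le> - (1/t) * (ln a + ln (f t))"
        using tp by (simp add: divide_simps)
      also have "\<dots> = - ln a / t + F t" unfolding F_def by (simp add: add_divide_distrib)
      finally show ?case .
    qed
  qed
qed

locale main = comb +
  fixes C :: real and A :: "'a set"
  assumes prob: "prob_space M" and thmeas: "\<theta> \<in> measurable M M"
    and phim: "\<phi> \<in> borel_measurable M" and Cup: "\<forall>x\<in>space M. \<phi> x \<le> C"
    and Am: "A \<in> sets M"
begin

lemma funpow_meas: "(\<theta> ^^ k) \<in> measurable M M"
proof (induction k)
  case 0 then show ?case by simp
next
  case (Suc k) then show ?case using thmeas by (simp add: measurable_comp)
qed

lemma birk_meas: "birk_sum \<theta> \<phi> k \<in> borel_measurable M"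
proof -
  have "(\<lambda>x. \<Sum>j<k. \<phi> ((\<theta> ^^ j) x)) \<in> borel_measurable M"
    using funpow_meas phim by (intro borel_measurable_sum) (auto intro: measurable_compose)
  then show ?thesis unfolding birk_sum_def[abs_def] by simp
qed

lemmas [measurable] = funpow_meas birk_meas phim Am

definition "Dset t = {p \<in> space (M \<Otimes>\<^sub>M lborel). 0 \<le> snd p \<and> snd p < \<phi> (fst p) \<and>
   (\<forall>k. birk_sum \<theta> \<phi> k (fst p) \<le> snd p + t \<longrightarrow> (\<theta> ^^ k) (fst p) \<notin> A)}"
definition "Eset t = {x \<in> space M. \<forall>k. birk_sum \<theta> \<phi> k x \<le> t \<longrightarrow> (\<theta> ^^ k) x \<notin> A}"
definition "Gset t = {p \<in> space (M \<Otimes>\<^sub>M lborel). 0 \<le> snd p \<and> snd p < \<phi> (fst p) \<and> fst p \<in> Eset t}"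

lemma Dset_meas: "Dset t \<in> sets (M \<Otimes>\<^sub>M lborel)"
  unfolding Dset_def by measurable

lemma Eset_meas: "Eset t \<in> sets M"
  unfolding Eset_def by measurable

lemma Gset_meas: "Gset t \<in> sets (M \<Otimes>\<^sub>M lborel)"
  using Eset_meas unfolding Gset_def by measurable

lemma fs_eq: "flow_space M \<phi> = {p \<in> space (M \<Otimes>\<^sub>M lborel). 0 \<le> snd p \<and> snd p < \<phi> (fst p)}"
  by (auto simp: flow_space_def space_pair_measure)

lemma surv_D: "0 \<le> t \<Longrightarrow> survivors M \<theta> \<phi> A t = Dset t"
  by (subst survivors_eq) (auto simp: Dset_def fs_eq)

lemma G_eq: "{(x, s) \<in> flow_space M \<phi>. N_hit \<theta> A x \<ge> enat (N_ceil \<theta> \<phi> t x)} = Gset t"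
  using key_iff by (auto simp: Gset_def Eset_def fs_eq space_pair_measure)

lemma E_eq: "{x \<in> space M. N_hit \<theta> A x \<ge> enat (N_ceil \<theta> \<phi> t x)} = Eset t"
  using key_iff by (auto simp: Eset_def)

lemma big_fin: "emeasure (M \<Otimes>\<^sub>M lborel) (space M \<times> {0..C}) < \<infinity>"
proof -
  interpret prob_space M by (rule prob)
  have "emeasure (M \<Otimes>\<^sub>M lborel) (space M \<times> {0..C}) = emeasure M (space M) * emeasure lborel {0..C}"
    by (rule lborel.emeasure_pair_measure_Times) auto
  then show ?thesis using emeasure_bounded_finite[of "{0..C}"] by (simp add: emeasure_space_1)
qed

lemma fmeas: "S \<in> sets (M \<Otimes>\<^sub>M lborel) \<Longrightarrow> S \<subseteq> space M \<times> {0..C} \<Longrightarrow> S \<in> fmeasurable (M \<Otimes>\<^sub>M lborel)"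
  apply (rule fmeasurableI, assumption)
  apply (rule le_less_trans[OF _ big_fin])
  apply (rule emeasure_mono) apply auto
  done

lemma Dsub: "Dset t \<subseteq> space M \<times> {0..C}"
  using Cup by (fastforce simp: Dset_def space_pair_measure)
lemma Gsub: "Gset t \<subseteq> space M \<times> {0..C}"
  using Cup by (fastforce simp: Gset_def space_pair_measure)

lemma Dfm: "Dset t \<in> fmeasurable (M \<Otimes>\<^sub>M lborel)" by (rule fmeas[OF Dset_meas Dsub])
lemma Gfm: "Gset t \<in> fmeasurable (M \<Otimes>\<^sub>M lborel)" by (rule fmeas[OF Gset_meas Gsub])

lemma fD: "flow_measure M \<phi> (Dset t) = measure (M \<Otimes>\<^sub>M lborel) (Dset t)"
  unfolding flow_measure_def by (rule arg_cong[where f="measure _"]) (auto simp: Dset_def fs_eq)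
lemma fG: "flow_measure M \<phi> (Gset t) = measure (M \<Otimes>\<^sub>M lborel) (Gset t)"
  unfolding flow_measure_def by (rule arg_cong[where f="measure _"]) (auto simp: Gset_def fs_eq)

lemma D_anti: "t \<le> t' \<Longrightarrow> measure (M \<Otimes>\<^sub>M lborel) (Dset t') \<le> measure (M \<Otimes>\<^sub>M lborel) (Dset t)"
  by (rule measure_mono_fmeasurable[OF _ Dset_meas Dfm]) (auto simp: Dset_def)

lemma D_le_G: "measure (M \<Otimes>\<^sub>M lborel) (Dset t) \<le> measure (M \<Otimes>\<^sub>M lborel) (Gset t)"
  by (rule measure_mono_fmeasurable[OF _ Dset_meas Gfm]) (force simp: Dset_def Gset_def Eset_def space_pair_measure)

lemma G_le_D: "measure (M \<Otimes>\<^sub>M lborel) (Gset (t + C)) \<le> measure (M \<Otimes>\<^sub>M lborel) (Dset t)"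
proof (rule measure_mono_fmeasurable[OF _ Gset_meas Dfm])
  show "Gset (t + C) \<subseteq> Dset t"
  proof
    fix p assume p: "p \<in> Gset (t + C)"
    then have "snd p < C" using Cup by (force simp: Gset_def space_pair_measure)
    with p show "p \<in> Dset t" by (force simp: Dset_def Gset_def Eset_def)
  qed
qed

lemma meas_times: "E \<in> sets M \<Longrightarrow> 0 \<le> r \<Longrightarrow> measure (M \<Otimes>\<^sub>M lborel) (E \<times> {0..<r}) = measure M E * r"
proof -
  assume E: "E \<in> sets M" and r: "0 \<le> r"
  interpret prob_space M by (rule prob)
  have "emeasure (M \<Otimes>\<^sub>M lborel) (E \<times> {0..<r}) = emeasure M E * emeasure lborel {0..<r}"
    by (rule lborel.emeasure_pair_measure_Times) (use E in auto)
  also have "\<dots> = ennreal (measure M E * r)"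
    using r by (simp add: emeasure_eq_measure ennreal_mult)
  finally show ?thesis using r by (simp add: measure_def)
qed

lemma G_bounds: "c * measure M (Eset t) \<le> measure (M \<Otimes>\<^sub>M lborel) (Gset t) \<and>
   measure (M \<Otimes>\<^sub>M lborel) (Gset t) \<le> C * measure M (Eset t)"
proof
  have c0: "0 \<le> c" using cpos by simp
  have sub: "Eset t \<times> {0..<c} \<subseteq> Gset t"
    using clow cpos by (force simp: Gset_def Eset_def space_pair_measure)
  have "measure M (Eset t) * c \<le> measure (M \<Otimes>\<^sub>M lborel) (Gset t)"
    using measure_mono_fmeasurable[OF sub _ Gfm] meas_times[OF Eset_meas c0] Eset_meas by simp
  then show "c * measure M (Eset t) \<le> measure (M \<Otimes>\<^sub>M lborel) (Gset t)" by (simp add: mult.commute)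
  have C0: "0 \<le> C" using clow cpos Cup prob_space.not_empty[OF prob] by force
  have sub2: "Gset t \<subseteq> Eset t \<times> {0..<C}"
    using Cup by (force simp: Gset_def Eset_def space_pair_measure)
  have fm2: "Eset t \<times> {0..<C} \<in> fmeasurable (M \<Otimes>\<^sub>M lborel)"
    using Eset_meas by (intro fmeas) (auto simp: Eset_def)
  have "measure (M \<Otimes>\<^sub>M lborel) (Gset t) \<le> measure M (Eset t) * C"
    using measure_mono_fmeasurable[OF sub2 Gset_meas fm2] meas_times[OF Eset_meas C0] by simp
  then show "measure (M \<Otimes>\<^sub>M lborel) (Gset t) \<le> C * measure M (Eset t)" by (simp add: mult.commute)
qed

lemma Cpos: "C > 0" using clow cpos Cup prob_space.not_empty[OF prob] by force

lemma final:
  assumes esc: "has_escape_rate M \<theta> \<phi> A \<rho>"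
  shows "(((\<lambda>t. - (1 / t) * ln (flow_measure M \<phi>
            {(x, s) \<in> flow_space M \<phi>. N_hit \<theta> A x \<ge> enat (N_ceil \<theta> \<phi> t x)})) \<longlongrightarrow> \<rho>) at_top) \<and>
         (((\<lambda>t. - (1 / t) * ln (measure M
            {x \<in> space M. N_hit \<theta> A x \<ge> enat (N_ceil \<theta> \<phi> t x)})) \<longlongrightarrow> \<rho>) at_top)"
proof -
  define f where "f t = flow_measure M \<phi> (survivors M \<theta> \<phi> A t)" for t
  have fD': "f t = measure (M \<Otimes>\<^sub>M lborel) (Dset t)" if "0 \<le> t" for t
    using that by (simp add: f_def surv_D fD)
  have lim: "((\<lambda>t. - (1/t) * ln (f t)) \<longlongrightarrow> \<rho>) at_top"
    using esc unfolding has_escape_rate_def f_def .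
  have f0: "0 \<le> f t" if "0 \<le> t" for t using fD'[OF that] by simp
  have anti: "f t' \<le> f t" if "0 \<le> t" "t \<le> t'" for t t'
    using fD' that D_anti by simp
  have g: "((\<lambda>t. - (1/t) * ln (measure (M \<Otimes>\<^sub>M lborel) (Gset t))) \<longlongrightarrow> \<rho>) at_top"
  proof (rule rate_transfer[OF lim f0 anti, of 1 1 C])
    fix t assume t: "C \<le> t"
    have "f t \<le> measure (M \<Otimes>\<^sub>M lborel) (Gset t)" using fD'[of t] D_le_G t Cpos by simp
    moreover have "measure (M \<Otimes>\<^sub>M lborel) (Gset t) \<le> f (t - C)"
      using G_le_D[of "t - C"] fD'[of "t - C"] t by simp
    ultimately show "1 * f t \<le> measure (M \<Otimes>\<^sub>M lborel) (Gset t) \<and>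
        measure (M \<Otimes>\<^sub>M lborel) (Gset t) \<le> 1 * f (t - C)" by simp
  qed (use Cpos in auto)
  have h: "((\<lambda>t. - (1/t) * ln (measure M (Eset t))) \<longlongrightarrow> \<rho>) at_top"
  proof (rule rate_transfer[OF lim f0 anti, of "1/C" "1/c" C])
    fix t assume t: "C \<le> t"
    have "f t \<le> measure (M \<Otimes>\<^sub>M lborel) (Gset t)" using fD'[of t] D_le_G t Cpos by simp
    moreover have "measure (M \<Otimes>\<^sub>M lborel) (Gset t) \<le> f (t - C)"
      using G_le_D[of "t - C"] fD'[of "t - C"] t by simp
    moreover note G_bounds[of t]
    ultimately show "1/C * f t \<le> measure M (Eset t) \<and> measure M (Eset t) \<le> 1/c * f (t - C)"
      using Cpos cpos by (auto simp: field_simps)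
  qed (use Cpos cpos in auto)
  show ?thesis using g h by (simp add: G_eq E_eq fG)
qed

end

theorem lemma3p10:
  fixes M :: "'a measure" and \<theta> :: "'a \<Rightarrow> 'a" and \<phi> :: "'a \<Rightarrow> real"
    and A :: "'a set" and \<rho> :: real
  assumes "prob_space M"
    and "\<theta> \<in> measure_preserving M M"
    and "\<phi> \<in> borel_measurable M"
    and "\<exists>c>0. \<forall>x\<in>space M. c \<le> \<phi> x"
    and "\<exists>C. \<forall>x\<in>space M. \<phi> x \<le> C"
    and "is_hole M \<theta> A"
    and "has_escape_rate M \<theta> \<phi> A \<rho>"
  shows "(((\<lambda>t. - (1 / t) * ln (flow_measure M \<phi>
            {(x, s) \<in> flow_space M \<phi>. N_hit \<theta> A x \<ge> enat (N_ceil \<theta> \<phi> t x)})) \<longlongrightarrow> \<rho>) at_top) \<and>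
         (((\<lambda>t. - (1 / t) * ln (measure M
            {x \<in> space M. N_hit \<theta> A x \<ge> enat (N_ceil \<theta> \<phi> t x)})) \<longlongrightarrow> \<rho>) at_top)"
proof -
  obtain c where c: "c > 0" "\<forall>x\<in>space M. c \<le> \<phi> x" using assms(4) by blast
  obtain C where C: "\<forall>x\<in>space M. \<phi> x \<le> C" using assms(5) by blast
  have tm: "\<theta> \<in> measurable M M" using assms(2) by (simp add: measure_preserving_def)
  have sp: "\<forall>y\<in>space M. \<theta> y \<in> space M" using tm by (simp add: measurable_space)
  have Am: "A \<in> sets M" using assms(6) by (simp add: is_hole_def)
  have cm: "comb M \<theta> \<phi> c" using sp c by (simp add: comb_def)
  have ma: "main_axioms M \<theta> \<phi> C A" using assms(1,3) tm C Am by (simp add: main_axioms_def)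
  interpret main M \<theta> \<phi> c C A using cm ma by (rule main.intro)
  show ?thesis by (rule final[OF assms(7)])
qed

end
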